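(* Let $U\in\mathrm{St}(r,n)$ and suppose $\Psi^{-1}U=P\begin{bsmallmatrix}K_r\\ O_{n-r,r}\end{bsmallmatrix}$ with $P\in\mathbb{C}^{n\times n}$ unitary and $K_r\in\mathbb{C}^{r\times r}$ invertible. Then there is a unitary matrix $W_P\in\mathbb{C}^{r\times r}$ such that $K_r=(\Sigma_{11}^P)^{-1/2}W_P$. Moreover, for any orthogonal $W\in\mathbb{R}^{r\times r}$, $\Psi P\begin{bsmallmatrix}(\Sigma_{11}^P)^{-1/2}W_PW\\ O_{n-r,r}\end{bsmallmatrix}=UW\in\mathrm{St}(r,n)$.
   Context: $\mathrm{St}(r,n):=\{X\in\mathbb{R}^{n\times r}\mid X^{\top}X=I_r\}$, $1\le r\le n-1$. $\Psi\in\mathbb{C}^{n\times n}$ is an invertible matrix whose columns are unit-norm (generalized) eigenvectors of a real matrix $A\in\mathbb{R}^{n\times n}$. For unitary $P$, $\Sigma^P:=P^{\dagger}\Psi^{\dagger}\Psi P$ and $\Sigma_{11}^P\in\mathbb{C}^{r\times r}$ is its upper-left $r\times r$ block (a positive definite Hermitian matrix); $(\Sigma_{11}^P)^{-1/2}$ is its inverse Hermitian positive definite square root. *)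

theory Defs
  imports Complex_Main "Jordan_Normal_Form.Matrix"
begin

definition cadj :: "complex mat \<Rightarrow> complex mat" where
  "cadj M = mat (dim_col M) (dim_row M) (\<lambda>(i,j). cnj (M $$ (j,i)))"

definition unitary_mat :: "nat \<Rightarrow> complex mat \<Rightarrow> bool" where
  "unitary_mat n P \<longleftrightarrow> P \<in> carrier_mat n n \<and> cadj P * P = 1\<^sub>m n \<and> P * cadj P = 1\<^sub>m n"

definition real_orthogonal_mat :: "nat \<Rightarrow> real mat \<Rightarrow> bool" where
  "real_orthogonal_mat n W \<longleftrightarrow> W \<in> carrier_mat n n \<and>
     transpose_mat W * W = 1\<^sub>m n \<and> W * transpose_mat W = 1\<^sub>m n"

definition stiefel :: "nat \<Rightarrow> nat \<Rightarrow> real mat set" where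
  "stiefel r n = {X \<in> carrier_mat n r. transpose_mat X * X = 1\<^sub>m r}"

definition hermitian_mat :: "complex mat \<Rightarrow> bool" where
  "hermitian_mat S \<longleftrightarrow> S \<in> carrier_mat (dim_row S) (dim_row S) \<and> cadj S = S"

definition hpd_mat :: "complex mat \<Rightarrow> bool" where
  "hpd_mat S \<longleftrightarrow> hermitian_mat S \<and>
     (\<forall>v \<in> carrier_vec (dim_row S). v \<noteq> 0\<^sub>v (dim_row S) \<longrightarrow>
        0 < Re (\<Sum>i<dim_row S. cnj (v $ i) * (S *\<^sub>v v) $ i))"

definition inv_sqrt_mat :: "complex mat \<Rightarrow> complex mat" where
  "inv_sqrt_mat M = (THE S. S \<in> carrier_mat (dim_row M) (dim_row M) \<and> hpd_mat S \<and>
                           S * S * M = 1\<^sub>m (dim_row M))"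

definition ul_block :: "nat \<Rightarrow> complex mat \<Rightarrow> complex mat" where
  "ul_block r M = mat r r (\<lambda>(i,j). M $$ (i,j))"

definition Sigma_P :: "complex mat \<Rightarrow> complex mat \<Rightarrow> complex mat" where
  "Sigma_P \<Psi> P = cadj P * cadj \<Psi> * \<Psi> * P"

definition Sigma11 :: "nat \<Rightarrow> complex mat \<Rightarrow> complex mat \<Rightarrow> complex mat" where
  "Sigma11 r \<Psi> P = ul_block r (Sigma_P \<Psi> P)"

definition cmat :: "real mat \<Rightarrow> complex mat" where
  "cmat M = map_mat complex_of_real M"

definition gen_eigenvector :: "complex mat \<Rightarrow> complex vec \<Rightarrow> bool" where
  "gen_eigenvector A v \<longleftrightarrow> v \<in> carrier_vec (dim_row A) \<and> v \<noteq> 0\<^sub>v (dim_row A) \<and>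
     (\<exists>ev k. k \<ge> 1 \<and> ((A - ev \<cdot>\<^sub>m 1\<^sub>m (dim_row A)) ^\<^sub>m k) *\<^sub>v v = 0\<^sub>v (dim_row A))"

definition unit_vec_norm :: "complex vec \<Rightarrow> bool" where
  "unit_vec_norm v \<longleftrightarrow> (\<Sum>i<dim_vec v. (cmod (v $ i))\<^sup>2) = 1"

end

theory Submission
  imports Defs "Jordan_Normal_Form.Spectral_Radius"
begin


lemma cadj_carrier[simp]: "cadj M \<in> carrier_mat (dim_col M) (dim_row M)"
  unfolding cadj_def by auto
lemma dim_cadj[simp]: "dim_row (cadj M) = dim_col M" "dim_col (cadj M) = dim_row M"
  unfolding cadj_def by auto
lemma cadj_carrierI: "M \<in> carrier_mat a b \<Longrightarrow> cadj M \<in> carrier_mat b a"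
  by auto
lemma index_cadj[simp]: "i < dim_col M \<Longrightarrow> j < dim_row M \<Longrightarrow> cadj M $$ (i,j) = cnj (M $$ (j,i))"
  unfolding cadj_def by auto
lemma cadj_cadj[simp]: "cadj (cadj M) = M"
  by (rule eq_matI, auto)
lemma cadj_mult: assumes "A \<in> carrier_mat a b" "B \<in> carrier_mat b c"
  shows "cadj (A * B) = cadj B * cadj A"
  using assms by (intro eq_matI) (auto simp: scalar_prod_def mult.commute intro!: sum.cong)
lemma cadj_one[simp]: "cadj (1\<^sub>m n) = 1\<^sub>m n"
  by (rule eq_matI, auto)
lemma cadj_zero[simp]: "cadj (0\<^sub>m a b) = 0\<^sub>m b a"
  by (rule eq_matI, auto)
lemma cadj_add: assumes "A \<in> carrier_mat a b" "B \<in> carrier_mat a b"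
  shows "cadj (A + B) = cadj A + cadj B"
  using assms by (intro eq_matI) auto
lemma cadj_minus: assumes "A \<in> carrier_mat a b" "B \<in> carrier_mat a b"
  shows "cadj (A - B) = cadj A - cadj B"
  using assms by (intro eq_matI) auto


definition qf :: "complex mat \<Rightarrow> complex vec \<Rightarrow> complex" where
  "qf S v = (\<Sum>i<dim_row S. cnj (v $ i) * (S *\<^sub>v v) $ i)"

lemma hpd_matI: assumes "S \<in> carrier_mat k k" "cadj S = S"
  "\<And>v. v \<in> carrier_vec k \<Longrightarrow> v \<noteq> 0\<^sub>v k \<Longrightarrow> 0 < Re (qf S v)"
  shows "hpd_mat S"
  using assms unfolding hpd_mat_def hermitian_mat_def qf_def by auto

lemma hpd_matD: assumes "hpd_mat S" "S \<in> carrier_mat k k"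
  shows "cadj S = S" "\<And>v. v \<in> carrier_vec k \<Longrightarrow> v \<noteq> 0\<^sub>v k \<Longrightarrow> 0 < Re (qf S v)"
  using assms unfolding hpd_mat_def hermitian_mat_def qf_def by auto

lemma mult_mat_vec_index: "A \<in> carrier_mat a b \<Longrightarrow> w \<in> carrier_vec b \<Longrightarrow> i < a \<Longrightarrow>
   (A *\<^sub>v w) $ i = (\<Sum>k<b. A $$ (i,k) * w $ k)"
  by (simp add: scalar_prod_def lessThan_atLeast0)

lemma sum_cnj_mult_vec: assumes U: "U \<in> carrier_mat a b" and v: "v \<in> carrier_vec a" and w: "w \<in> carrier_vec b"
  shows "(\<Sum>i<a. cnj (v $ i) * (U *\<^sub>v w) $ i) = (\<Sum>k<b. cnj ((cadj U *\<^sub>v v) $ k) * w $ k)"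
proof -
  have cU: "cadj U \<in> carrier_mat b a" using U by auto
  have "(\<Sum>i<a. cnj (v $ i) * (U *\<^sub>v w) $ i) = (\<Sum>i<a. \<Sum>k<b. cnj (v $ i) * (U $$ (i,k) * w $ k))"
    by (rule sum.cong[OF refl], simp add: mult_mat_vec_index[OF U w] sum_distrib_left)
  also have "\<dots> = (\<Sum>k<b. \<Sum>i<a. cnj (v $ i) * (U $$ (i,k) * w $ k))" by (rule sum.swap)
  also have "\<dots> = (\<Sum>k<b. cnj ((cadj U *\<^sub>v v) $ k) * w $ k)"
  proof (rule sum.cong[OF refl])
    fix k assume k: "k \<in> {..<b}"
    have "(cadj U *\<^sub>v v) $ k = (\<Sum>i<a. cadj U $$ (k,i) * v $ i)"
      using mult_mat_vec_index[OF cU v] k by simp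
    also have "\<dots> = (\<Sum>i<a. cnj (U $$ (i,k)) * v $ i)"
      using U k by (intro sum.cong) auto
    finally have e: "cnj ((cadj U *\<^sub>v v) $ k) = (\<Sum>i<a. cnj (v $ i) * U $$ (i,k))"
      by (simp add: mult.commute)
    have "(\<Sum>i<a. cnj (v $ i) * (U $$ (i,k) * w $ k)) = (\<Sum>i<a. cnj (v $ i) * U $$ (i,k)) * w $ k"
      by (simp add: sum_distrib_right mult.assoc)
    then show "(\<Sum>i<a. cnj (v $ i) * (U $$ (i,k) * w $ k)) = cnj ((cadj U *\<^sub>v v) $ k) * w $ k"
      unfolding e .
  qed
  finally show ?thesis .
qed

lemma qf_conj: assumes U: "U \<in> carrier_mat a b" and D: "D \<in> carrier_mat b b" and v: "v \<in> carrier_vec a"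
  shows "qf (U * D * cadj U) v = qf D (cadj U *\<^sub>v v)"
proof -
  have cU: "cadj U \<in> carrier_mat b a" using U by auto
  have "(U * D * cadj U) *\<^sub>v v = (U * D) *\<^sub>v (cadj U *\<^sub>v v)"
    using U D v cU by (intro assoc_mult_mat_vec[of "U*D" a b "cadj U" a v]) auto
  also have "\<dots> = U *\<^sub>v (D *\<^sub>v (cadj U *\<^sub>v v))"
    using U D v cU by (intro assoc_mult_mat_vec[of U a b D b]) auto
  finally have e: "(U * D * cadj U) *\<^sub>v v = U *\<^sub>v (D *\<^sub>v (cadj U *\<^sub>v v))" .
  have r: "dim_row (U * D * cadj U) = a" "dim_row D = b" using U D by auto
  have w: "D *\<^sub>v (cadj U *\<^sub>v v) \<in> carrier_vec b" using D cU v by auto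
  show ?thesis unfolding qf_def r e
    using sum_cnj_mult_vec[OF U v w] .
qed



lemma delta_sum0: "i < (n::nat) \<Longrightarrow> (\<Sum>k<n. if k = i then f k else 0) = f i"
  by (subst sum.delta) auto
lemma delta_sum1: assumes i: "i < (n::nat)" shows "(\<Sum>k<n. (if i = k then 1 else 0) * (f k :: complex)) = f i"
proof -
  have "(\<Sum>k<n. (if i = k then 1 else 0) * (f k :: complex)) = (\<Sum>k<n. if k = i then f k else 0)"
    by (rule sum.cong) auto
  then show ?thesis using delta_sum0[OF i] i by simp
qed
lemma delta_sum2: assumes i: "j < (n::nat)" shows "(\<Sum>k<n. (f k :: complex) * (if k = j then 1 else 0)) = f j"
proof -
  have "(\<Sum>k<n. (f k :: complex) * (if k = j then 1 else 0)) = (\<Sum>k<n. if k = j then f k else 0)"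
    by (rule sum.cong) auto
  then show ?thesis using delta_sum0[OF i] i by simp
qed
lemma delta_sum3: "i < (n::nat) \<Longrightarrow> j < n \<Longrightarrow> (\<Sum>k<n. (if i = k then 1 else 0) * (if k = j then 1 else (0::complex))) = (if i = j then 1 else 0)"
  by (simp add: delta_sum1)

lemma hh_sum: fixes x y :: "nat \<Rightarrow> complex" assumes i: "i < (n::nat)" and j: "j < n"
  shows "(\<Sum>k<n. ((if i=k then 1 else 0) - c*x i*y k) * ((if k=j then 1 else 0) - c*x k*y j))
    = (if i=j then 1 else 0) - 2*c*x i*y j + c*c*x i*y j*(\<Sum>k<n. y k * x k)"
proof -
  have "(\<Sum>k<n. ((if i=k then 1 else 0) - c*x i*y k) * ((if k=j then 1 else 0) - c*x k*y j))
    = (\<Sum>k<n. (if i=k then 1 else 0) * (if k=j then 1 else 0)) - (\<Sum>k<n. (if i=k then 1 else 0) * (c*x k*y j))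
      - (\<Sum>k<n. (c*x i*y k) * (if k=j then 1 else 0)) + (\<Sum>k<n. c*c*x i*y j*(y k * x k))"
    unfolding sum_subtractf[symmetric] sum.distrib[symmetric]
    by (rule sum.cong[OF refl]) (simp add: algebra_simps)
  also have "\<dots> = (if i=j then 1 else 0) - c*x i*y j - c*x i*y j + c*c*x i*y j*(\<Sum>k<n. y k * x k)"
    using i j by (simp add: delta_sum1 delta_sum2 delta_sum3 sum_distrib_left)
  finally show ?thesis by simp
qed



lemma cnj_mult_self: "cnj z * z = complex_of_real ((cmod z)^2)"
  using complex_norm_square[of z] by (simp add: mult.commute)

lemma householder:
  assumes u: "u \<in> carrier_vec n" and n: "0 < n"
    and nu: "(\<Sum>i<n. cnj (u$i) * u$i) = 1" and u0: "cnj (u$0) = u$0"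
  shows "\<exists>H. unitary_mat n H \<and> cadj H = H \<and> col H 0 = u"
proof -
  define w where "w = (\<lambda>i. (if i = 0 then 1 else 0) - u$i)"
  define sr where "sr = (\<Sum>k<n. (cmod (w k))^2)"
  define c where "c = (if sr = 0 then 0 else 2 / sr)"
  define H where "H = mat n n (\<lambda>(i,j). (if i = j then 1 else 0) - complex_of_real c * w i * cnj (w j))"
  have Hc: "H \<in> carrier_mat n n" unfolding H_def by auto
  have s1: "complex_of_real sr = (\<Sum>k<n. cnj (w k) * w k)"
    unfolding sr_def by (simp add: cnj_mult_self)
  have "(\<Sum>k<n. cnj (w k) * w k) = (\<Sum>k<n. ((if 0 = k then 1 else 0) - cnj (u$k)) * ((if k = 0 then 1 else 0) - u$k))"
    unfolding w_def by (rule sum.cong) auto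
  also have "\<dots> = (\<Sum>k<n. (if 0 = k then 1 else 0) * (if k = 0 then 1 else 0)) - (\<Sum>k<n. (if 0 = k then 1 else 0) * u$k)
      - (\<Sum>k<n. cnj (u$k) * (if k = 0 then 1 else 0)) + (\<Sum>k<n. cnj (u$k) * u$k)"
    unfolding sum_subtractf[symmetric] sum.distrib[symmetric]
    by (rule sum.cong[OF refl]) (simp add: algebra_simps)
  also have "\<dots> = 2 - 2 * u$0"
    using n nu u0 delta_sum1[OF n, of "\<lambda>k. u$k"] delta_sum2[OF n, of "\<lambda>k. cnj (u$k)"] delta_sum3[OF n n] by simp
  finally have s2: "complex_of_real sr = 2 - 2 * u$0" using s1 by simp
  have w0: "cnj (w 0) = 1 - u$0" unfolding w_def using u0 by simp
  have sr0: "sr = 0 \<Longrightarrow> w k = 0" if "k < n" for k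
  proof -
    assume "sr = 0"
    then have "\<forall>k\<in>{..<n}. (cmod (w k))^2 = 0"
      unfolding sr_def by (subst (asm) sum_nonneg_eq_0_iff) auto
    then show ?thesis using that by auto
  qed
  have cs: "sr \<noteq> 0 \<Longrightarrow> c * sr = 2" unfolding c_def by auto
  have HH: "H * H = 1\<^sub>m n"
  proof (rule eq_matI)
    fix i j assume i: "i < dim_row (1\<^sub>m n)" and j: "j < dim_col (1\<^sub>m n)"
    then have i: "i < n" and j: "j < n" by auto
    have "(H * H) $$ (i,j) = (\<Sum>k<n. H $$ (i,k) * H $$ (k,j))"
      using i j Hc by (simp add: scalar_prod_def lessThan_atLeast0)
    also have "\<dots> = (\<Sum>k<n. ((if i=k then 1 else 0) - complex_of_real c * w i * (cnj \<circ> w) k) *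
           ((if k=j then 1 else 0) - complex_of_real c * w k * (cnj \<circ> w) j))"
      using i j unfolding H_def by (intro sum.cong) auto
    also have "\<dots> = (if i=j then 1 else 0) - 2 * complex_of_real c * w i * cnj (w j)
         + complex_of_real c * complex_of_real c * w i * cnj (w j) * (\<Sum>k<n. cnj (w k) * w k)"
      by (subst hh_sum[OF i j]) simp
    also have "\<dots> = (if i=j then 1 else 0) + complex_of_real c * w i * cnj (w j) * (complex_of_real (c * sr) - 2)"
      unfolding s1[symmetric] by (simp add: algebra_simps)
    also have "\<dots> = (if i=j then 1 else 0)"
    proof (cases "sr = 0")
      case True then show ?thesis using sr0[OF i] by simp
    next
      case False then show ?thesis using cs by simp
    qed
    finally show "(H * H) $$ (i,j) = 1\<^sub>m n $$ (i,j)" using i j by simp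
  qed (insert Hc, auto)
  have cH: "cadj H = H"
  proof (rule eq_matI)
    fix i j assume "i < dim_row H" "j < dim_col H"
    then have i: "i<n" "j<n" using Hc by auto
    then show "cadj H $$ (i,j) = H $$ (i,j)" using Hc unfolding H_def by (simp add: mult.commute)
  qed (insert Hc, auto)
  have colH: "col H 0 = u"
  proof (rule eq_vecI)
    fix i assume "i < dim_vec u"
    then have i: "i < n" using u by auto
    have "col H 0 $ i = (if i = 0 then 1 else 0) - complex_of_real c * w i * (1 - u$0)"
      using i n w0 unfolding H_def by simp
    also have "\<dots> = u $ i"
    proof (cases "sr = 0")
      case True then show ?thesis using sr0[OF i] unfolding w_def by simp
    next
      case False
      have e1: "1 - u$0 = complex_of_real sr / 2" using s2 by simp
      have "complex_of_real (c * sr) = 2" using cs[OF False] by simp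
      then have e2: "complex_of_real c * complex_of_real sr = 2" by simp
      have e3: "complex_of_real c * (1 - u$0) = 1" unfolding e1 using e2 by simp
      have "complex_of_real c * w i * (1 - u$0) = w i * (complex_of_real c * (1 - u$0))"
        by (simp add: ac_simps)
      also have "\<dots> = w i" unfolding e3 by simp
      finally have e4: "complex_of_real c * w i * (1 - u$0) = w i" .
      show ?thesis unfolding e4 unfolding w_def by simp
    qed
    finally show "col H 0 $ i = u $ i" .
  qed (insert u Hc, auto)
  have "unitary_mat n H" unfolding unitary_mat_def cH using HH Hc by simp
  then show ?thesis using cH colH by blast
qed



lemma mult_index: "A \<in> carrier_mat a b \<Longrightarrow> B \<in> carrier_mat b c \<Longrightarrow> i < a \<Longrightarrow> j < c \<Longrightarrow>
  (A * B) $$ (i,j) = (\<Sum>k<b. A $$ (i,k) * B $$ (k,j))"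
  by (simp add: scalar_prod_def lessThan_atLeast0)

definition ext :: "complex mat \<Rightarrow> complex mat" where
  "ext V = mat (Suc (dim_row V)) (Suc (dim_row V))
     (\<lambda>(i,j). if i = 0 \<or> j = 0 then (if i = j then 1 else 0) else V $$ (i-1, j-1))"

lemma ext_carrier: "V \<in> carrier_mat m m \<Longrightarrow> ext V \<in> carrier_mat (Suc m) (Suc m)"
  unfolding ext_def by auto

lemma ext_index: assumes "V \<in> carrier_mat m m"
  shows "ext V $$ (0,0) = 1" "j < m \<Longrightarrow> ext V $$ (0, Suc j) = 0" "i < m \<Longrightarrow> ext V $$ (Suc i, 0) = 0"
    "i < m \<Longrightarrow> j < m \<Longrightarrow> ext V $$ (Suc i, Suc j) = V $$ (i,j)"
  using assms unfolding ext_def by auto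

lemma ext_mult_left: assumes X: "X \<in> carrier_mat m m" and A: "A \<in> carrier_mat (Suc m) c" and j: "j < c"
  shows "(ext X * A) $$ (0,j) = A $$ (0,j)"
    "i < m \<Longrightarrow> (ext X * A) $$ (Suc i,j) = (\<Sum>k<m. X $$ (i,k) * A $$ (Suc k, j))"
proof -
  have E: "ext X \<in> carrier_mat (Suc m) (Suc m)" using ext_carrier[OF X] .
  have "(ext X * A) $$ (0,j) = (\<Sum>k<Suc m. ext X $$ (0,k) * A $$ (k,j))"
    using mult_index[OF E A _ j] by simp
  also have "\<dots> = A $$ (0,j)" unfolding sum.lessThan_Suc_shift using ext_index[OF X] by simp
  finally show "(ext X * A) $$ (0,j) = A $$ (0,j)" .
  assume i: "i < m"
  have "(ext X * A) $$ (Suc i,j) = (\<Sum>k<Suc m. ext X $$ (Suc i,k) * A $$ (k,j))"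
    using mult_index[OF E A _ j] i by simp
  also have "\<dots> = (\<Sum>k<m. X $$ (i,k) * A $$ (Suc k, j))" unfolding sum.lessThan_Suc_shift
    using ext_index[OF X] i by simp
  finally show "(ext X * A) $$ (Suc i,j) = (\<Sum>k<m. X $$ (i,k) * A $$ (Suc k, j))" .
qed

lemma ext_mult_right: assumes Y: "Y \<in> carrier_mat m m" and A: "A \<in> carrier_mat c (Suc m)" and i: "i < c"
  shows "(A * ext Y) $$ (i,0) = A $$ (i,0)"
    "j < m \<Longrightarrow> (A * ext Y) $$ (i,Suc j) = (\<Sum>k<m. A $$ (i, Suc k) * Y $$ (k,j))"
proof -
  have E: "ext Y \<in> carrier_mat (Suc m) (Suc m)" using ext_carrier[OF Y] .
  have "(A * ext Y) $$ (i,0) = (\<Sum>k<Suc m. A $$ (i,k) * ext Y $$ (k,0))"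
    using mult_index[OF A E i] by simp
  also have "\<dots> = A $$ (i,0)" unfolding sum.lessThan_Suc_shift using ext_index[OF Y] by simp
  finally show "(A * ext Y) $$ (i,0) = A $$ (i,0)" .
  assume j: "j < m"
  have "(A * ext Y) $$ (i,Suc j) = (\<Sum>k<Suc m. A $$ (i,k) * ext Y $$ (k,Suc j))"
    using mult_index[OF A E i] j by simp
  also have "\<dots> = (\<Sum>k<m. A $$ (i, Suc k) * Y $$ (k,j))" unfolding sum.lessThan_Suc_shift
    using ext_index[OF Y] j by simp
  finally show "(A * ext Y) $$ (i,Suc j) = (\<Sum>k<m. A $$ (i, Suc k) * Y $$ (k,j))" .
qed

lemma ext_mult: assumes V: "V \<in> carrier_mat m m" and W: "W \<in> carrier_mat m m"
  shows "ext V * ext W = ext (V * W)"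
proof -
  have EV: "ext V \<in> carrier_mat (Suc m) (Suc m)" using ext_carrier[OF V] .
  have EW: "ext W \<in> carrier_mat (Suc m) (Suc m)" using ext_carrier[OF W] .
  have VW: "V * W \<in> carrier_mat m m" using V W by auto
  show ?thesis
  proof (rule eq_matI)
    fix i j assume "i < dim_row (ext (V * W))" "j < dim_col (ext (V * W))"
    then have i: "i < Suc m" and j: "j < Suc m" using ext_carrier[OF VW] by auto
    show "(ext V * ext W) $$ (i,j) = ext (V * W) $$ (i,j)"
    proof (cases i)
      case 0
      then show ?thesis using ext_mult_left(1)[OF V EW j] ext_index[OF W] ext_index[OF VW] j
        by (cases j) auto
    next
      case (Suc i')
      then have i': "i' < m" using i by auto
      show ?thesis
      proof (cases j)
        case 0
        then show ?thesis using ext_mult_left(2)[OF V EW j i'] ext_index[OF W] ext_index[OF VW] i' Suc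
          by simp
      next
        case (Suc j')
        then have j': "j' < m" using j by auto
        have "(ext V * ext W) $$ (Suc i', Suc j') = (\<Sum>k<m. V $$ (i',k) * W $$ (k, j'))"
          using ext_mult_left(2)[OF V EW j i'] ext_index[OF W] j' Suc by simp
        also have "\<dots> = (V * W) $$ (i', j')" using mult_index[OF V W i' j'] by simp
        finally show ?thesis using ext_index(4)[OF VW i' j'] Suc \<open>i = Suc i'\<close> by simp
      qed
    qed
  qed (insert EV EW VW ext_carrier[OF VW], auto)
qed

lemma ext_one: "ext (1\<^sub>m m) = 1\<^sub>m (Suc m)"
  by (rule eq_matI) (auto simp: ext_def)

lemma cadj_ext: assumes V: "V \<in> carrier_mat m m" shows "cadj (ext V) = ext (cadj V)"
  by (rule eq_matI) (insert V, auto simp: ext_def)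

lemma ext_unitary: assumes "unitary_mat m V" shows "unitary_mat (Suc m) (ext V)"
proof -
  have V: "V \<in> carrier_mat m m" and cV: "cadj V \<in> carrier_mat m m" using assms unfolding unitary_mat_def by auto
  show ?thesis unfolding unitary_mat_def cadj_ext[OF V] ext_mult[OF V cV] ext_mult[OF cV V]
    using assms ext_carrier[OF V] ext_one unfolding unitary_mat_def by simp
qed

lemma ext_conj_index: assumes X: "X \<in> carrier_mat m m" and Y: "Y \<in> carrier_mat m m"
  and B: "B \<in> carrier_mat (Suc m) (Suc m)" and i: "i < m" and j: "j < m"
  shows "(ext X * B * ext Y) $$ (Suc i, 0) = (\<Sum>k<m. X $$ (i,k) * B $$ (Suc k, 0))"
    "(ext X * B * ext Y) $$ (Suc i, Suc j) = (X * mat m m (\<lambda>(i,j). B $$ (Suc i, Suc j)) * Y) $$ (i,j)"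
proof -
  have XB: "ext X * B \<in> carrier_mat (Suc m) (Suc m)" using ext_carrier[OF X] B by auto
  show "(ext X * B * ext Y) $$ (Suc i, 0) = (\<Sum>k<m. X $$ (i,k) * B $$ (Suc k, 0))"
    using ext_mult_right(1)[OF Y XB] ext_mult_left(2)[OF X B _ i] i by simp
  define B22 where "B22 = mat m m (\<lambda>(i,j). B $$ (Suc i, Suc j))"
  have B22: "B22 \<in> carrier_mat m m" unfolding B22_def by auto
  have XB22: "X * B22 \<in> carrier_mat m m" using X B22 by auto
  have "(ext X * B * ext Y) $$ (Suc i, Suc j) = (\<Sum>l<m. (ext X * B) $$ (Suc i, Suc l) * Y $$ (l,j))"
    using ext_mult_right(2)[OF Y XB _ j] i by simp
  also have "\<dots> = (\<Sum>l<m. (X * B22) $$ (i, l) * Y $$ (l,j))"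
  proof (rule sum.cong[OF refl])
    fix l assume l: "l \<in> {..<m}"
    have "(ext X * B) $$ (Suc i, Suc l) = (\<Sum>k<m. X $$ (i,k) * B $$ (Suc k, Suc l))"
      using ext_mult_left(2)[OF X B _ i] l by simp
    also have "\<dots> = (X * B22) $$ (i,l)" using mult_index[OF X B22 i, of l] l unfolding B22_def
      by (auto intro!: sum.cong)
    finally show "(ext X * B) $$ (Suc i, Suc l) * Y $$ (l,j) = (X * B22) $$ (i, l) * Y $$ (l,j)" by simp
  qed
  also have "\<dots> = (X * B22 * Y) $$ (i,j)" using mult_index[OF XB22 Y i j] by simp
  finally show "(ext X * B * ext Y) $$ (Suc i, Suc j) = (X * mat m m (\<lambda>(i,j). B $$ (Suc i, Suc j)) * Y) $$ (i,j)"
    unfolding B22_def .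
qed



lemma unitary_carrier: "unitary_mat n U \<Longrightarrow> U \<in> carrier_mat n n"
  unfolding unitary_mat_def by auto
lemma unitary_cadj_carrier: "unitary_mat n U \<Longrightarrow> cadj U \<in> carrier_mat n n"
  unfolding unitary_mat_def by auto
lemma unitary_cancel1: assumes u: "unitary_mat n U" and X: "X \<in> carrier_mat n k" shows "U * (cadj U * X) = X"
proof -
  have U: "U \<in> carrier_mat n n" and cU: "cadj U \<in> carrier_mat n n" using u unfolding unitary_mat_def by auto
  have "U * (cadj U * X) = (U * cadj U) * X" using assoc_mult_mat[OF U cU X] by (rule sym)
  also have "\<dots> = X" using u X unfolding unitary_mat_def by simp
  finally show ?thesis .
qed
lemma unitary_cancel2: assumes u: "unitary_mat n U" and X: "X \<in> carrier_mat n k" shows "cadj U * (U * X) = X"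
proof -
  have U: "U \<in> carrier_mat n n" and cU: "cadj U \<in> carrier_mat n n" using u unfolding unitary_mat_def by auto
  have "cadj U * (U * X) = (cadj U * U) * X" using assoc_mult_mat[OF cU U X] by (rule sym)
  also have "\<dots> = X" using u X unfolding unitary_mat_def by simp
  finally show ?thesis .
qed
lemma unitary_mult: assumes "unitary_mat n U" "unitary_mat n V" shows "unitary_mat n (U * V)"
proof -
  have U: "U \<in> carrier_mat n n" "cadj U \<in> carrier_mat n n" and V: "V \<in> carrier_mat n n" "cadj V \<in> carrier_mat n n"
    using assms unitary_carrier unitary_cadj_carrier by auto
  have c: "cadj (U * V) = cadj V * cadj U" using cadj_mult[OF U(1) V(1)] .
  have "cadj V * cadj U * (U * V) = cadj V * (cadj U * (U * V))" using U V by (intro assoc_mult_mat[of _ n n _ n _ n]) auto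
  also have "\<dots> = 1\<^sub>m n" using unitary_cancel2[OF assms(1) V(1)] assms(2) unfolding unitary_mat_def by simp
  finally have 1: "cadj (U * V) * (U * V) = 1\<^sub>m n" unfolding c .
  have "U * V * (cadj V * cadj U) = U * (V * (cadj V * cadj U))" using U V by (intro assoc_mult_mat[of _ n n _ n _ n]) auto
  also have "\<dots> = 1\<^sub>m n" using unitary_cancel1[OF assms(2) U(2)] assms(1) unfolding unitary_mat_def by simp
  finally have 2: "U * V * cadj (U * V) = 1\<^sub>m n" unfolding c .
  show ?thesis using 1 2 U V unfolding unitary_mat_def by auto
qed

lemma unit_eigenvector:
  assumes A: "A \<in> carrier_mat (Suc m) (Suc m)"
  shows "\<exists>u lam. u \<in> carrier_vec (Suc m) \<and> (\<Sum>i<Suc m. cnj (u$i) * u$i) = 1 \<and> cnj (u$0) = u$0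
     \<and> A *\<^sub>v u = lam \<cdot>\<^sub>v u"
proof -
  from spectrum_non_empty[OF A] obtain lam where "lam \<in> spectrum A" by auto
  then obtain v where v: "v \<in> carrier_vec (Suc m)" "v \<noteq> 0\<^sub>v (Suc m)" "A *\<^sub>v v = lam \<cdot>\<^sub>v v"
    unfolding spectrum_def eigenvalue_def eigenvector_def using A by auto
  define sr where "sr = (\<Sum>i<Suc m. (cmod (v$i))^2)"
  have "\<exists>k<Suc m. v $ k \<noteq> 0"
  proof (rule ccontr)
    assume "\<not> (\<exists>k<Suc m. v $ k \<noteq> 0)"
    then have "v = 0\<^sub>v (Suc m)" using v(1) by (intro eq_vecI) auto
    then show False using v(2) by simp
  qed
  then obtain k where k: "k < Suc m" "v $ k \<noteq> 0" by auto
  have "0 < (cmod (v$k))^2" using k by auto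
  moreover have "(cmod (v$k))^2 \<le> sr" unfolding sr_def
    by (rule member_le_sum) (use k in auto)
  ultimately have sr: "0 < sr" by linarith
  define p where "p = (if v$0 = 0 then 1 else cnj (v$0) / cmod (v$0))"
  define al where "al = p / complex_of_real (sqrt sr)"
  define u where "u = al \<cdot>\<^sub>v v"
  have cp: "cnj p * p = 1"
  proof (cases "v$0 = 0")
    case True then show ?thesis unfolding p_def by simp
  next
    case False
    have "cnj p * p = (cnj (v$0) * v$0) / (complex_of_real (cmod (v$0)) * complex_of_real (cmod (v$0)))"
      unfolding p_def using False by simp
    also have "\<dots> = 1" unfolding cnj_mult_self using False by (simp add: power2_eq_square)
    finally show ?thesis .
  qed
  have cal: "cnj al * al = 1 / complex_of_real sr"
    unfolding al_def using sr cp by (simp add: field_simps power2_eq_square flip: of_real_mult)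
  have uc: "u \<in> carrier_vec (Suc m)" unfolding u_def using v by auto
  have "(\<Sum>i<Suc m. cnj (u$i) * u$i) = (\<Sum>i<Suc m. (cnj al * al) * (cnj (v$i) * v$i))"
    unfolding u_def using v by (intro sum.cong) (auto simp: ac_simps)
  also have "\<dots> = (cnj al * al) * complex_of_real sr"
    unfolding sum_distrib_left[symmetric] sr_def by (simp add: cnj_mult_self)
  also have "\<dots> = 1" using sr cal by simp
  finally have nu: "(\<Sum>i<Suc m. cnj (u$i) * u$i) = 1" .
  have "u $ 0 = complex_of_real (cmod (v$0) / sqrt sr)"
  proof (cases "v$0 = 0")
    case True then show ?thesis unfolding u_def al_def p_def using v by simp
  next
    case False
    have "u $ 0 = cnj (v$0) * v$0 / complex_of_real (cmod (v$0)) / complex_of_real (sqrt sr)"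
      unfolding u_def al_def p_def using v False by simp
    also have "\<dots> = complex_of_real (cmod (v$0) / sqrt sr)"
      using False by (simp add: cnj_mult_self power2_eq_square)
    finally show ?thesis .
  qed
  then have u0: "cnj (u$0) = u$0" by simp
  have "A *\<^sub>v u = lam \<cdot>\<^sub>v u" unfolding u_def using v A
    by (simp add: mult_mat_vec smult_smult_assoc mult.commute)
  then show ?thesis using uc nu u0 by blast
qed



lemma sq_assoc: "A \<in> carrier_mat n n \<Longrightarrow> B \<in> carrier_mat n n \<Longrightarrow> C \<in> carrier_mat n n \<Longrightarrow> A * B * C = A * (B * C)"
  by (rule assoc_mult_mat)

lemma unitary_conj_cancel: assumes W: "unitary_mat n W" and X: "X \<in> carrier_mat n n"
  shows "W * (cadj W * X * W) * cadj W = X"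
proof -
  have Wc: "W \<in> carrier_mat n n" and cW: "cadj W \<in> carrier_mat n n"
    using W unitary_carrier unitary_cadj_carrier by auto
  have XW: "X * W \<in> carrier_mat n n" using X Wc by simp
  have "cadj W * X * W = cadj W * (X * W)" by (rule sq_assoc[OF cW X Wc])
  then have "W * (cadj W * X * W) = X * W" using unitary_cancel1[OF W XW] by simp
  then have "W * (cadj W * X * W) * cadj W = X * W * cadj W" by simp
  also have "\<dots> = X * (W * cadj W)" by (rule sq_assoc[OF X Wc cW])
  also have "\<dots> = X" using W X unfolding unitary_mat_def by simp
  finally show ?thesis .
qed

lemma assoc5: assumes "X \<in> carrier_mat n n" "Y \<in> carrier_mat n n" "Z \<in> carrier_mat n n" "W \<in> carrier_mat n n" "R \<in> carrier_mat n n"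
  shows "X * Y * Z * (W * R) = X * (Y * Z * W) * R"
proof -
  have YZ: "Y * Z \<in> carrier_mat n n" using assms by simp
  have YZW: "Y * Z * W \<in> carrier_mat n n" using assms by simp
  have XY: "X * Y \<in> carrier_mat n n" using assms by simp
  have XYZ: "X * Y * Z \<in> carrier_mat n n" using assms by simp
  have "X * Y * Z * (W * R) = X * Y * Z * W * R" using sq_assoc[OF XYZ assms(4,5)] by simp
  also have "X * Y * Z * W = X * (Y * Z * W)"
    using sq_assoc[OF XY assms(3,4)] sq_assoc[OF assms(1,2) assms(3)] sq_assoc[OF assms(1) YZ assms(4)]
      sq_assoc[OF assms(2,3,4)] sq_assoc[OF assms(1,2)] by metis
  finally show ?thesis .
qed

lemma schur_unitary: "A \<in> carrier_mat n n \<Longrightarrow>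
  \<exists>U T. unitary_mat n U \<and> T \<in> carrier_mat n n \<and> upper_triangular T \<and> A = U * T * cadj U"
proof (induction n arbitrary: A)
  case 0
  have u: "unitary_mat 0 (1\<^sub>m 0)" unfolding unitary_mat_def by simp
  have "A = 1\<^sub>m 0 * A * cadj (1\<^sub>m 0)" using 0 by simp
  moreover have "upper_triangular A" using 0 unfolding upper_triangular_def by simp
  ultimately show ?case using u 0 by blast
next
  case (Suc m)
  note A = Suc.prems
  obtain u lam where u: "u \<in> carrier_vec (Suc m)" and nu: "(\<Sum>i<Suc m. cnj (u$i) * u$i) = 1"
    and u0: "cnj (u$0) = u$0" and ev: "A *\<^sub>v u = lam \<cdot>\<^sub>v u"
    using unit_eigenvector[OF A] by blast
  obtain H where H: "unitary_mat (Suc m) H" and colH: "col H 0 = u"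
    using householder[OF u _ nu u0] by blast
  have Hc: "H \<in> carrier_mat (Suc m) (Suc m)" and cH: "cadj H \<in> carrier_mat (Suc m) (Suc m)"
    using H unitary_carrier unitary_cadj_carrier by auto
  define B where "B = cadj H * A * H"
  have HA: "cadj H * A \<in> carrier_mat (Suc m) (Suc m)" using cH A by simp
  have Bc: "B \<in> carrier_mat (Suc m) (Suc m)" unfolding B_def using HA Hc by simp
  have "col B 0 = (cadj H * A) *\<^sub>v col H 0" unfolding B_def by (rule col_mult2[OF HA Hc]) simp
  also have "\<dots> = cadj H *\<^sub>v (A *\<^sub>v u)" unfolding colH by (rule assoc_mult_mat_vec[OF cH A u])
  also have "\<dots> = lam \<cdot>\<^sub>v (cadj H *\<^sub>v u)" unfolding ev by (rule mult_mat_vec[OF cH u])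
  also have "cadj H *\<^sub>v u = col (cadj H * H) 0" unfolding colH[symmetric] by (rule col_mult2[OF cH Hc, symmetric]) simp
  also have "\<dots> = unit_vec (Suc m) 0" using H unfolding unitary_mat_def by simp
  finally have colB: "col B 0 = lam \<cdot>\<^sub>v unit_vec (Suc m) 0" .
  have B0: "B $$ (Suc k, 0) = 0" if k: "k < m" for k
  proof -
    have "B $$ (Suc k, 0) = col B 0 $ Suc k" using Bc k by simp
    also have "\<dots> = 0" unfolding colB using k by simp
    finally show ?thesis .
  qed
  define B22 where "B22 = mat m m (\<lambda>(i,j). B $$ (Suc i, Suc j))"
  have B22c: "B22 \<in> carrier_mat m m" unfolding B22_def by simp
  obtain V T2 where V: "unitary_mat m V" and T2c: "T2 \<in> carrier_mat m m" and T2: "upper_triangular T2"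
    and B22: "B22 = V * T2 * cadj V"
    using Suc.IH[OF B22c] by blast
  have Vc: "V \<in> carrier_mat m m" and cV: "cadj V \<in> carrier_mat m m"
    using V unitary_carrier unitary_cadj_carrier by auto
  have T2eq: "cadj V * B22 * V = T2"
  proof -
    have "V * T2 * cadj V = V * (T2 * cadj V)" by (rule sq_assoc[OF Vc T2c cV])
    then have "cadj V * B22 = T2 * cadj V" unfolding B22 using unitary_cancel2[OF V, of "T2 * cadj V" m] T2c cV by simp
    then have "cadj V * B22 * V = T2 * cadj V * V" by simp
    also have "\<dots> = T2 * (cadj V * V)" by (rule sq_assoc[OF T2c cV Vc])
    also have "\<dots> = T2" using V T2c unfolding unitary_mat_def by simp
    finally show ?thesis .
  qed
  define V' where "V' = ext V"
  have V': "unitary_mat (Suc m) V'" unfolding V'_def by (rule ext_unitary[OF V])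
  have V'c: "V' \<in> carrier_mat (Suc m) (Suc m)" and cV': "cadj V' \<in> carrier_mat (Suc m) (Suc m)"
    using V' unitary_carrier unitary_cadj_carrier by auto
  have cadjV': "cadj V' = ext (cadj V)" unfolding V'_def by (rule cadj_ext[OF Vc])
  define T where "T = cadj V' * B * V'"
  have Tc: "T \<in> carrier_mat (Suc m) (Suc m)" unfolding T_def using cV' Bc V'c by simp
  have Tut: "upper_triangular T" unfolding upper_triangular_def
  proof (intro allI impI)
    fix i j assume i: "i < dim_row T" and ji: "j < i"
    then obtain i' where i': "i = Suc i'" "i' < m" using Tc by (cases i) auto
    show "T $$ (i,j) = 0"
    proof (cases j)
      case 0
      have "T $$ (i,j) = (\<Sum>k<m. cadj V $$ (i',k) * B $$ (Suc k, 0))"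
        unfolding T_def cadjV' unfolding V'_def i' 0 by (rule ext_conj_index(1)[OF cV Vc Bc i'(2) i'(2)])
      also have "\<dots> = 0" using B0 by (intro sum.neutral) auto
      finally show ?thesis .
    next
      case (Suc j')
      then have j': "j' < m" "j' < i'" using ji i' by auto
      have "T $$ (i,j) = (cadj V * B22 * V) $$ (i',j')"
        unfolding T_def cadjV' unfolding V'_def i' Suc B22_def by (rule ext_conj_index(2)[OF cV Vc Bc i'(2) j'(1)])
      also have "\<dots> = 0" unfolding T2eq using T2 T2c i' j' unfolding upper_triangular_def by auto
      finally show ?thesis .
    qed
  qed
  define U where "U = H * V'"
  have U: "unitary_mat (Suc m) U" unfolding U_def by (rule unitary_mult[OF H V'])
  have "U * T * cadj U = H * V' * T * (cadj V' * cadj H)"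
    unfolding U_def using cadj_mult[OF Hc V'c] by simp
  also have "\<dots> = H * (V' * T * cadj V') * cadj H" by (rule assoc5[OF Hc V'c Tc cV' cH])
  also have "V' * T * cadj V' = B" unfolding T_def by (rule unitary_conj_cancel[OF V' Bc])
  also have "H * B * cadj H = A" unfolding B_def by (rule unitary_conj_cancel[OF H A])
  finally show ?case using U Tc Tut by metis
qed



lemma unitary_cadj: "unitary_mat n W \<Longrightarrow> unitary_mat n (cadj W)"
  unfolding unitary_mat_def by auto

lemma unitary_conj_cancel': assumes W: "unitary_mat n W" and X: "X \<in> carrier_mat n n"
  shows "cadj W * (W * X * cadj W) * W = X"
  using unitary_conj_cancel[OF unitary_cadj[OF W] X] by simp

lemma cadj_conj: assumes W: "W \<in> carrier_mat n n" and X: "X \<in> carrier_mat n n"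
  shows "cadj (W * X * cadj W) = W * cadj X * cadj W"
proof -
  have cW: "cadj W \<in> carrier_mat n n" and cX: "cadj X \<in> carrier_mat n n" using W X by auto
  have WX: "W * X \<in> carrier_mat n n" using W X by simp
  have "cadj (W * X * cadj W) = cadj (cadj W) * cadj (W * X)" by (rule cadj_mult[OF WX cW])
  also have "cadj (W * X) = cadj X * cadj W" by (rule cadj_mult[OF W X])
  also have "cadj (cadj W) * (cadj X * cadj W) = W * cadj X * cadj W" using sq_assoc[OF W cX cW] by simp
  finally show ?thesis .
qed

lemma conj_mult: assumes W: "unitary_mat n W" and X: "X \<in> carrier_mat n n" and Y: "Y \<in> carrier_mat n n"
  shows "(W * X * cadj W) * (W * Y * cadj W) = W * (X * Y) * cadj W"
proof -
  have Wc: "W \<in> carrier_mat n n" and cW: "cadj W \<in> carrier_mat n n"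
    using W unitary_carrier unitary_cadj_carrier by auto
  have WX: "W * X \<in> carrier_mat n n" using Wc X by simp
  have YcW: "Y * cadj W \<in> carrier_mat n n" using cW Y by simp
  have WYcW: "W * Y * cadj W \<in> carrier_mat n n" using Wc Y cW by simp
  have e1: "W * Y * cadj W = W * (Y * cadj W)" by (rule sq_assoc[OF Wc Y cW])
  have "(W * X * cadj W) * (W * Y * cadj W) = W * X * (cadj W * (W * Y * cadj W))"
    by (rule sq_assoc[OF WX cW WYcW])
  also have "\<dots> = W * X * (Y * cadj W)" unfolding e1 unitary_cancel2[OF W YcW] ..
  also have "\<dots> = W * X * Y * cadj W" by (rule sq_assoc[OF WX Y cW, symmetric])
  also have "\<dots> = W * (X * Y) * cadj W" unfolding sq_assoc[OF Wc X Y] ..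
  finally show ?thesis .
qed

lemma herm_diag: assumes A: "A \<in> carrier_mat n n" and hA: "cadj A = A"
  shows "\<exists>U T. unitary_mat n U \<and> T \<in> carrier_mat n n \<and> (\<forall>i<n. \<forall>j<n. i \<noteq> j \<longrightarrow> T $$ (i,j) = 0)
     \<and> cadj T = T \<and> A = U * T * cadj U"
proof -
  obtain U T where U: "unitary_mat n U" and Tc: "T \<in> carrier_mat n n" and ut: "upper_triangular T"
    and AT: "A = U * T * cadj U" using schur_unitary[OF A] by blast
  have Uc: "U \<in> carrier_mat n n" and cU: "cadj U \<in> carrier_mat n n"
    using U unitary_carrier unitary_cadj_carrier by auto
  have "cadj T = cadj (cadj U * A * U)" unfolding AT unitary_conj_cancel'[OF U Tc] ..
  also have "\<dots> = cadj U * cadj A * cadj (cadj U)" using cadj_conj[OF cU A] by simp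
  also have "\<dots> = cadj U * A * U" unfolding hA by simp
  also have "\<dots> = T" unfolding AT by (rule unitary_conj_cancel'[OF U Tc])
  finally have hT: "cadj T = T" .
  have "T $$ (i,j) = 0" if i: "i < n" and j: "j < n" and ij: "i \<noteq> j" for i j
  proof (cases "j < i")
    case True then show ?thesis using ut i Tc unfolding upper_triangular_def by auto
  next
    case False
    then have "i < j" using ij by auto
    then have "T $$ (j,i) = 0" using ut j Tc unfolding upper_triangular_def by auto
    moreover have "T $$ (i,j) = cnj (T $$ (j,i))"
      using arg_cong[OF hT, of "\<lambda>M. M $$ (i,j)"] i j Tc by simp
    ultimately show ?thesis by simp
  qed
  then show ?thesis using U Tc hT AT by blast
qed



lemma mult_zero_vec: "A \<in> carrier_mat m n \<Longrightarrow> A *\<^sub>v 0\<^sub>v n = 0\<^sub>v m"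
  by (intro eq_vecI) (auto simp: scalar_prod_def)

lemma unit_vec_nz: "i < n \<Longrightarrow> unit_vec n i \<noteq> (0\<^sub>v n :: complex vec)"
proof
  assume i: "i < n" and h: "unit_vec n i = (0\<^sub>v n :: complex vec)"
  have "unit_vec n i $ i = (1::complex)" using i by simp
  then show False unfolding h using i by simp
qed

lemma qf_unit: assumes T: "T \<in> carrier_mat n n" and i: "i < n"
  shows "qf T (unit_vec n i) = T $$ (i,i)"
proof -
  have "qf T (unit_vec n i) = (\<Sum>a<n. (if a = i then (T *\<^sub>v unit_vec n i) $ a else 0))"
    unfolding qf_def using T by (intro sum.cong) (auto simp: unit_vec_def)
  also have "\<dots> = (T *\<^sub>v unit_vec n i) $ i" using delta_sum0[OF i] .
  also have "\<dots> = T $$ (i,i)" using T i by simp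
  finally show ?thesis .
qed

lemma unitary_vec_nonzero: assumes U: "unitary_mat n U" and v: "v \<in> carrier_vec n" and v0: "v \<noteq> 0\<^sub>v n"
  shows "U *\<^sub>v v \<noteq> 0\<^sub>v n"
proof
  assume h: "U *\<^sub>v v = 0\<^sub>v n"
  have Uc: "U \<in> carrier_mat n n" and cU: "cadj U \<in> carrier_mat n n"
    using U unitary_carrier unitary_cadj_carrier by auto
  have "v = (cadj U * U) *\<^sub>v v" using U v unfolding unitary_mat_def by simp
  also have "\<dots> = cadj U *\<^sub>v (U *\<^sub>v v)" by (rule assoc_mult_mat_vec[OF cU Uc v])
  also have "\<dots> = 0\<^sub>v n" unfolding h by (rule mult_zero_vec[OF cU])
  finally show False using v0 by simp
qed

lemma hpd_sqrt_exists: assumes N: "N \<in> carrier_mat n n" and hN: "cadj N = N"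
  and pd: "\<And>v. v \<in> carrier_vec n \<Longrightarrow> v \<noteq> 0\<^sub>v n \<Longrightarrow> 0 < Re (qf N v)"
  shows "\<exists>S. S \<in> carrier_mat n n \<and> hpd_mat S \<and> S * S = N"
proof -
  obtain U T where U: "unitary_mat n U" and Tc: "T \<in> carrier_mat n n"
    and od: "\<And>i j. i < n \<Longrightarrow> j < n \<Longrightarrow> i \<noteq> j \<Longrightarrow> T $$ (i,j) = 0"
    and hT: "cadj T = T" and NT: "N = U * T * cadj U" using herm_diag[OF N hN] by blast
  have Uc: "U \<in> carrier_mat n n" and cU: "cadj U \<in> carrier_mat n n"
    using U unitary_carrier unitary_cadj_carrier by auto
  have dpos: "0 < Re (T $$ (i,i))" if i: "i < n" for i
  proof -
    define x where "x = U *\<^sub>v unit_vec n i"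
    have xc: "x \<in> carrier_vec n" unfolding x_def using Uc by simp
    have x0: "x \<noteq> 0\<^sub>v n" unfolding x_def
      by (rule unitary_vec_nonzero[OF U]) (use i unit_vec_nz[OF i] in auto)
    have "cadj U *\<^sub>v x = (cadj U * U) *\<^sub>v unit_vec n i" unfolding x_def
      by (rule assoc_mult_mat_vec[OF cU Uc, symmetric]) simp
    also have "\<dots> = unit_vec n i" using U unfolding unitary_mat_def by simp
    finally have cx: "cadj U *\<^sub>v x = unit_vec n i" .
    have "qf N x = T $$ (i,i)" unfolding NT qf_conj[OF Uc Tc xc] cx by (rule qf_unit[OF Tc i])
    then show ?thesis using pd[OF xc x0] by simp
  qed
  have dreal: "T $$ (i,i) = complex_of_real (Re (T $$ (i,i)))" if i: "i < n" for i
  proof -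
    have "cnj (T $$ (i,i)) = T $$ (i,i)" using arg_cong[OF hT, of "\<lambda>M. M $$ (i,i)"] i Tc by simp
    then show ?thesis by (simp add: complex_eq_iff)
  qed
  define s where "s = (\<lambda>i. sqrt (Re (T $$ (i,i))))"
  have spos: "0 < s i" if "i < n" for i unfolding s_def using dpos[OF that] by simp
  define D where "D = mat n n (\<lambda>(i,j). if i = j then complex_of_real (s i) else 0)"
  have Dc: "D \<in> carrier_mat n n" unfolding D_def by simp
  have DD: "D * D = T"
  proof (rule eq_matI)
    fix i j assume "i < dim_row T" "j < dim_col T"
    then have i: "i < n" and j: "j < n" using Tc by auto
    have "(D * D) $$ (i,j) = (\<Sum>k<n. D $$ (i,k) * D $$ (k,j))" by (rule mult_index[OF Dc Dc i j])
    also have "\<dots> = (\<Sum>k<n. if k = i then D $$ (i,k) * D $$ (k,j) else 0)"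
      using i j by (intro sum.cong) (auto simp: D_def)
    also have "\<dots> = D $$ (i,i) * D $$ (i,j)" using delta_sum0[OF i, of "\<lambda>k. D $$ (i,k) * D $$ (k,j)"] by simp
    also have "\<dots> = T $$ (i,j)"
    proof (cases "i = j")
      case True
      have "D $$ (i,i) * D $$ (i,j) = complex_of_real (s i * s i)" using True i unfolding D_def by simp
      also have "s i * s i = Re (T $$ (i,i))" unfolding s_def using dpos[OF i] by simp
      finally show ?thesis using dreal[OF i] True by simp
    next
      case False
      then show ?thesis using od[OF i j False] i j unfolding D_def by simp
    qed
    finally show "(D * D) $$ (i,j) = T $$ (i,j)" .
  qed (insert Tc Dc, auto)
  have hD: "cadj D = D" by (rule eq_matI) (auto simp: D_def)
  define S where "S = U * D * cadj U"
  have Sc: "S \<in> carrier_mat n n" unfolding S_def using Uc Dc cU by simp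
  have SS: "S * S = N" unfolding S_def NT conj_mult[OF U Dc Dc] DD ..
  have hS: "cadj S = S" unfolding S_def cadj_conj[OF Uc Dc] hD ..
  have "0 < Re (qf S v)" if v: "v \<in> carrier_vec n" and v0: "v \<noteq> 0\<^sub>v n" for v
  proof -
    define y where "y = cadj U *\<^sub>v v"
    have yc: "y \<in> carrier_vec n" unfolding y_def using cU v by simp
    have y0: "y \<noteq> 0\<^sub>v n" unfolding y_def by (rule unitary_vec_nonzero[OF unitary_cadj[OF U] v v0])
    obtain k where k: "k < n" "y $ k \<noteq> 0"
    proof -
      have "\<exists>k<n. y $ k \<noteq> 0"
      proof (rule ccontr)
        assume "\<not> (\<exists>k<n. y $ k \<noteq> 0)"
        then have "y = 0\<^sub>v n" using yc by (intro eq_vecI) auto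
        then show False using y0 by simp
      qed
      then show ?thesis using that by auto
    qed
    have "qf S v = qf D y" unfolding S_def y_def by (rule qf_conj[OF Uc Dc v])
    also have "\<dots> = (\<Sum>a<n. complex_of_real (s a * (cmod (y $ a))^2))"
      unfolding qf_def
    proof (rule sum.cong)
      fix a assume a: "a \<in> {..<n}"
      have an: "a < n" using a by simp
      have "(D *\<^sub>v y) $ a = (\<Sum>k<n. D $$ (a,k) * y $ k)" by (rule mult_mat_vec_index[OF Dc yc an])
      also have "\<dots> = (\<Sum>k<n. if k = a then complex_of_real (s a) * y $ k else 0)"
        using an by (intro sum.cong) (auto simp: D_def)
      also have "\<dots> = complex_of_real (s a) * y $ a" by (rule delta_sum0[OF an])
      finally have e: "(D *\<^sub>v y) $ a = complex_of_real (s a) * y $ a" .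
      have "cnj (y $ a) * (D *\<^sub>v y) $ a = complex_of_real (s a) * (cnj (y $ a) * y $ a)"
        unfolding e by (simp only: ac_simps)
      also have "\<dots> = complex_of_real (s a) * complex_of_real ((cmod (y $ a))^2)"
        unfolding cnj_mult_self ..
      also have "\<dots> = complex_of_real (s a * (cmod (y $ a))^2)" by simp
      finally show "cnj (y $ a) * (D *\<^sub>v y) $ a = complex_of_real (s a * (cmod (y $ a))^2)" .
    qed (use Dc in simp)
    finally have "Re (qf S v) = (\<Sum>a<n. s a * (cmod (y $ a))^2)" by simp
    also have "\<dots> > 0"
    proof (rule sum_pos2[of "{..<n}" k])
      show "0 < s k * (cmod (y $ k))^2" using spos[OF k(1)] k(2) by simp
      show "\<And>i. i \<in> {..<n} \<Longrightarrow> 0 \<le> s i * (cmod (y $ i))^2" using spos by (simp add: less_imp_le)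
    qed (use k in auto)
    finally show ?thesis .
  qed
  then have "hpd_mat S" by (intro hpd_matI[OF Sc hS]) auto
  then show ?thesis using Sc SS by blast
qed



lemma hpd_sq_unique: assumes S1c: "S1 \<in> carrier_mat n n" and S2c: "S2 \<in> carrier_mat n n"
  and h1: "hpd_mat S1" and h2: "hpd_mat S2" and eq: "S1 * S1 = S2 * S2"
  shows "S1 = S2"
proof -
  note hd1 = hpd_matD[OF h1 S1c] and hd2 = hpd_matD[OF h2 S2c]
  define d where "d = (\<lambda>a b. S1 $$ (a,b) - S2 $$ (a,b))"
  define h where "h = (\<lambda>a b. S1 $$ (a,b) + S2 $$ (a,b))"
  have F1: "cnj (d a b) = d b a" if "a < n" "b < n" for a b
  proof -
    have "cnj (S1 $$ (a,b)) = S1 $$ (b,a)" using arg_cong[OF hd1(1), of "\<lambda>M. M $$ (b,a)"] that S1c by simp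
    moreover have "cnj (S2 $$ (a,b)) = S2 $$ (b,a)" using arg_cong[OF hd2(1), of "\<lambda>M. M $$ (b,a)"] that S2c by simp
    ultimately show ?thesis unfolding d_def by simp
  qed
  have F2: "(\<Sum>b<n. h a b * d b j) = - (\<Sum>b<n. d a b * h b j)" if a: "a < n" and j: "j < n" for a j
  proof -
    have "(\<Sum>b<n. h a b * d b j) + (\<Sum>b<n. d a b * h b j)
       = 2 * (\<Sum>b<n. S1 $$ (a,b) * S1 $$ (b,j)) - 2 * (\<Sum>b<n. S2 $$ (a,b) * S2 $$ (b,j))"
      unfolding sum.distrib[symmetric] sum_subtractf[symmetric] sum_distrib_left
      by (rule sum.cong[OF refl]) (simp add: d_def h_def algebra_simps)
    also have "(\<Sum>b<n. S1 $$ (a,b) * S1 $$ (b,j)) = (\<Sum>b<n. S2 $$ (a,b) * S2 $$ (b,j))"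
      using mult_index[OF S1c S1c a j] mult_index[OF S2c S2c a j] eq by simp
    finally have "(\<Sum>b<n. h a b * d b j) + (\<Sum>b<n. d a b * h b j) = 0" by simp
    then show ?thesis by (simp add: eq_neg_iff_add_eq_0)
  qed
  define v where "v = (\<lambda>j. vec n (\<lambda>a. d a j))"
  define g where "g = (\<lambda>j. \<Sum>a<n. d j a * (\<Sum>b<n. h a b * d b j))"
  have vc: "v j \<in> carrier_vec n" for j unfolding v_def by simp
  have G: "qf S1 (v j) + qf S2 (v j) = g j" if j: "j < n" for j
  proof -
    have r: "dim_row S1 = n" "dim_row S2 = n" using S1c S2c by auto
    have "qf S1 (v j) + qf S2 (v j) = (\<Sum>a<n. cnj ((v j) $ a) * (S1 *\<^sub>v v j) $ a + cnj ((v j) $ a) * (S2 *\<^sub>v v j) $ a)"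
      unfolding qf_def r sum.distrib ..
    also have "\<dots> = (\<Sum>a<n. cnj (d a j) * ((S1 *\<^sub>v v j) $ a + (S2 *\<^sub>v v j) $ a))"
      by (rule sum.cong[OF refl]) (simp add: v_def distrib_left)
    also have "\<dots> = g j" unfolding g_def
    proof (rule sum.cong[OF refl])
      fix a assume a: "a \<in> {..<n}"
      then have a: "a < n" by simp
      have "(S1 *\<^sub>v v j) $ a + (S2 *\<^sub>v v j) $ a = (\<Sum>b<n. S1 $$ (a,b) * d b j) + (\<Sum>b<n. S2 $$ (a,b) * d b j)"
        using mult_mat_vec_index[OF S1c vc a] mult_mat_vec_index[OF S2c vc a] unfolding v_def
        by (simp add: v_def)
      also have "\<dots> = (\<Sum>b<n. h a b * d b j)" unfolding sum.distrib[symmetric] h_def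
        by (rule sum.cong[OF refl]) (simp add: algebra_simps)
      finally show "cnj (d a j) * ((S1 *\<^sub>v v j) $ a + (S2 *\<^sub>v v j) $ a) = d j a * (\<Sum>b<n. h a b * d b j)"
        using F1[OF a j] by simp
    qed
    finally show ?thesis .
  qed
  define Q1 where "Q1 = (\<Sum>x<n. \<Sum>y<n. \<Sum>z<n. d x y * h y z * d z x)"
  define Q2 where "Q2 = (\<Sum>j<n. \<Sum>a<n. \<Sum>b<n. d j a * d a b * h b j)"
  have "(\<Sum>j<n. g j) = Q1" unfolding g_def Q1_def
    by (simp add: sum_distrib_left mult.assoc)
  moreover have "(\<Sum>j<n. g j) = - Q2" unfolding g_def Q2_def
  proof -
    have "(\<Sum>j<n. \<Sum>a<n. d j a * (\<Sum>b<n. h a b * d b j)) = (\<Sum>j<n. \<Sum>a<n. d j a * (- (\<Sum>b<n. d a b * h b j)))"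
      using F2 by (intro sum.cong refl) auto
    also have "\<dots> = - (\<Sum>j<n. \<Sum>a<n. \<Sum>b<n. d j a * d a b * h b j)"
      by (simp add: sum_distrib_left sum_negf mult.assoc)
    finally show "(\<Sum>j<n. \<Sum>a<n. d j a * (\<Sum>b<n. h a b * d b j)) = - (\<Sum>j<n. \<Sum>a<n. \<Sum>b<n. d j a * d a b * h b j)" .
  qed
  moreover have "Q2 = Q1"
  proof -
    have "Q2 = (\<Sum>a<n. \<Sum>j<n. \<Sum>b<n. d j a * d a b * h b j)" unfolding Q2_def by (rule sum.swap)
    also have "\<dots> = (\<Sum>a<n. \<Sum>b<n. \<Sum>j<n. d j a * d a b * h b j)" by (intro sum.cong refl sum.swap)
    also have "\<dots> = Q1" unfolding Q1_def by (intro sum.cong refl) (simp add: ac_simps)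
    finally show ?thesis .
  qed
  ultimately have Q0: "(\<Sum>j<n. g j) = 0" by simp
  have gnn: "0 \<le> Re (g j)" and gz: "Re (g j) = 0 \<Longrightarrow> v j = 0\<^sub>v n" if j: "j < n" for j
  proof -
    have gre: "Re (g j) = Re (qf S1 (v j)) + Re (qf S2 (v j))" unfolding G[OF j, symmetric] by simp
    show "Re (g j) = 0 \<Longrightarrow> v j = 0\<^sub>v n"
    proof (rule ccontr)
      assume "Re (g j) = 0" "v j \<noteq> 0\<^sub>v n"
      then show False using hd1(2)[OF vc, of j] hd2(2)[OF vc, of j] gre by simp
    qed
    show "0 \<le> Re (g j)"
    proof (cases "v j = 0\<^sub>v n")
      case True
      have "d a j = 0" if "a < n" for a
      proof -
        have "d a j = v j $ a" using that unfolding v_def by simp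
        also have "\<dots> = 0" unfolding True using that by simp
        finally show ?thesis .
      qed
      then have "d j a = 0" if "a < n" for a using F1[OF that j] that by (metis complex_cnj_zero)
      then show ?thesis unfolding g_def by simp
    next
      case False
      then show ?thesis using hd1(2)[OF vc False] hd2(2)[OF vc False] gre by simp
    qed
  qed
  have "(\<Sum>j<n. Re (g j)) = 0" using arg_cong[OF Q0, of Re] by simp
  then have "\<forall>j\<in>{..<n}. Re (g j) = 0" using gnn by (subst (asm) sum_nonneg_eq_0_iff) auto
  then have vz: "v j = 0\<^sub>v n" if "j < n" for j using gz that by auto
  show ?thesis
  proof (rule eq_matI)
    fix i j assume "i < dim_row S2" "j < dim_col S2"
    then have i: "i < n" and j: "j < n" using S2c by auto
    have "d i j = 0" using arg_cong[OF vz[OF j], of "\<lambda>w. w $ i"] i unfolding v_def by simp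
    then show "S1 $$ (i,j) = S2 $$ (i,j)" unfolding d_def by simp
  qed (use S1c S2c in auto)
qed



lemma dim_append_rows[simp]: "dim_row (A @\<^sub>r B) = dim_row A + dim_row B" "dim_col (A @\<^sub>r B) = dim_col A"
  unfolding append_rows_def by simp_all

lemma append_rows_index: assumes A: "A \<in> carrier_mat a c" and B: "B \<in> carrier_mat b c"
  and i: "i < a + b" and j: "j < c"
  shows "(A @\<^sub>r B) $$ (i,j) = (if i < a then A $$ (i,j) else B $$ (i-a,j))"
  using A B i j unfolding append_rows_def by simp

lemma append_rows_mult: assumes A: "A \<in> carrier_mat a c" and B: "B \<in> carrier_mat b c" and C: "C \<in> carrier_mat c d"
  shows "(A @\<^sub>r B) * C = (A * C) @\<^sub>r (B * C)"
proof (rule eq_matI)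
  have AB: "A @\<^sub>r B \<in> carrier_mat (a + b) c" using A B by simp
  have AC: "A * C \<in> carrier_mat a d" and BC: "B * C \<in> carrier_mat b d" using A B C by auto
  fix i j assume "i < dim_row ((A * C) @\<^sub>r (B * C))" "j < dim_col ((A * C) @\<^sub>r (B * C))"
  then have i: "i < a + b" and j: "j < d" using carrier_append_rows[OF AC BC] by auto
  have "((A @\<^sub>r B) * C) $$ (i,j) = (\<Sum>k<c. (A @\<^sub>r B) $$ (i,k) * C $$ (k,j))" by (rule mult_index[OF AB C i j])
  also have "\<dots> = (\<Sum>k<c. (if i < a then A $$ (i,k) else B $$ (i-a,k)) * C $$ (k,j))"
    using append_rows_index[OF A B i] by (intro sum.cong) auto
  also have "\<dots> = (if i < a then (A * C) $$ (i,j) else (B * C) $$ (i-a,j))"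
    using mult_index[OF A C _ j, of i] mult_index[OF B C _ j, of "i-a"] i by (cases "i < a") auto
  also have "\<dots> = ((A * C) @\<^sub>r (B * C)) $$ (i,j)" using append_rows_index[OF AC BC i j] by simp
  finally show "((A @\<^sub>r B) * C) $$ (i,j) = ((A * C) @\<^sub>r (B * C)) $$ (i,j)" .
qed (use A B C in auto)

definition Emat :: "nat \<Rightarrow> nat \<Rightarrow> complex mat" where
  "Emat n r = mat n r (\<lambda>(i,j). if i = j then 1 else 0)"

lemma Emat_carrier: "Emat n r \<in> carrier_mat n r" unfolding Emat_def by simp
lemma dim_Emat[simp]: "dim_row (Emat n r) = n" "dim_col (Emat n r) = r" unfolding Emat_def by simp_all

lemma Emat_K: assumes K: "K \<in> carrier_mat r r" and rn: "r \<le> n"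
  shows "Emat n r * K = K @\<^sub>r 0\<^sub>m (n - r) r"
proof (rule eq_matI)
  have Z: "(0\<^sub>m (n - r) r :: complex mat) \<in> carrier_mat (n-r) r" by simp
  fix i j assume "i < dim_row (K @\<^sub>r 0\<^sub>m (n - r) r)" "j < dim_col (K @\<^sub>r 0\<^sub>m (n - r) r)"
  then have i: "i < r + (n - r)" and j: "j < r" using carrier_append_rows[OF K Z] by auto
  have "(Emat n r * K) $$ (i,j) = (\<Sum>k<r. Emat n r $$ (i,k) * K $$ (k,j))"
    by (rule mult_index[OF Emat_carrier K _ j]) (use i rn in simp)
  also have "\<dots> = (if i < r then K $$ (i,j) else 0)"
  proof (cases "i < r")
    case True
    have "(\<Sum>k<r. Emat n r $$ (i,k) * K $$ (k,j)) = (\<Sum>k<r. (if i = k then 1 else 0) * K $$ (k,j))"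
      using True rn by (intro sum.cong) (auto simp: Emat_def)
    also have "\<dots> = K $$ (i,j)" by (rule delta_sum1[OF True])
    finally show ?thesis using True by simp
  next
    case False
    then show ?thesis using i rn by (simp add: Emat_def)
  qed
  also have "\<dots> = (K @\<^sub>r 0\<^sub>m (n - r) r) $$ (i,j)" using append_rows_index[OF K Z i j] i j by simp
  finally show "(Emat n r * K) $$ (i,j) = (K @\<^sub>r 0\<^sub>m (n - r) r) $$ (i,j)" .
qed (use K rn in auto)

lemma Emat_ul: assumes X: "X \<in> carrier_mat n n" and rn: "r \<le> n"
  shows "cadj (Emat n r) * X * Emat n r = ul_block r X"
proof (rule eq_matI)
  have E: "Emat n r \<in> carrier_mat n r" by (rule Emat_carrier)
  have cE: "cadj (Emat n r) \<in> carrier_mat r n" using E by auto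
  have EX: "cadj (Emat n r) * X \<in> carrier_mat r n" using cE X by simp
  fix i j assume "i < dim_row (ul_block r X)" "j < dim_col (ul_block r X)"
  then have i: "i < r" and j: "j < r" unfolding ul_block_def by auto
  have iN: "i < n" and jN: "j < n" using i j rn by auto
  have row: "(cadj (Emat n r) * X) $$ (i,b) = X $$ (i,b)" if b: "b < n" for b
  proof -
    have "(cadj (Emat n r) * X) $$ (i,b) = (\<Sum>k<n. cadj (Emat n r) $$ (i,k) * X $$ (k,b))"
      by (rule mult_index[OF cE X i b])
    also have "\<dots> = (\<Sum>k<n. (if i = k then 1 else 0) * X $$ (k,b))"
      using i E by (intro sum.cong) (auto simp: Emat_def)
    also have "\<dots> = X $$ (i,b)" by (rule delta_sum1[OF iN])
    finally show ?thesis .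
  qed
  have "(cadj (Emat n r) * X * Emat n r) $$ (i,j) = (\<Sum>k<n. (cadj (Emat n r) * X) $$ (i,k) * Emat n r $$ (k,j))"
    by (rule mult_index[OF EX E i j])
  also have "\<dots> = (\<Sum>k<n. X $$ (i,k) * (if k = j then 1 else 0))"
    using j row by (intro sum.cong) (auto simp: Emat_def)
  also have "\<dots> = X $$ (i,j)" by (rule delta_sum2[OF jN])
  also have "\<dots> = ul_block r X $$ (i,j)" unfolding ul_block_def using i j by simp
  finally show "(cadj (Emat n r) * X * Emat n r) $$ (i,j) = ul_block r X $$ (i,j)" .
qed (unfold ul_block_def, use X in auto)


lemma cmat_carrier: "A \<in> carrier_mat a b \<Longrightarrow> cmat A \<in> carrier_mat a b"
  unfolding cmat_def by simp

lemma cmat_mult: assumes A: "A \<in> carrier_mat a b" and B: "B \<in> carrier_mat b c"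
  shows "cmat (A * B) = cmat A * cmat B"
proof (rule eq_matI)
  fix i j assume "i < dim_row (cmat A * cmat B)" "j < dim_col (cmat A * cmat B)"
  then have i: "i < a" and j: "j < c" using A B unfolding cmat_def by auto
  have "cmat (A * B) $$ (i,j) = complex_of_real (\<Sum>k<b. A $$ (i,k) * B $$ (k,j))"
    unfolding cmat_def using A B i j mult_index[OF A B i j] by simp
  also have "\<dots> = (\<Sum>k<b. cmat A $$ (i,k) * cmat B $$ (k,j))"
    unfolding cmat_def of_real_sum using A B i j by (intro sum.cong) auto
  also have "\<dots> = (cmat A * cmat B) $$ (i,j)"
    using mult_index[OF cmat_carrier[OF A] cmat_carrier[OF B] i j] by simp
  finally show "cmat (A * B) $$ (i,j) = (cmat A * cmat B) $$ (i,j)" .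
qed (use A B in \<open>auto simp: cmat_def\<close>)

lemma cadj_cmat: "cadj (cmat A) = cmat (transpose_mat A)"
  by (rule eq_matI) (auto simp: cmat_def)

lemma cmat_one: "cmat (1\<^sub>m n) = 1\<^sub>m n"
  by (rule eq_matI) (auto simp: cmat_def)

lemma cmat_zero_append: assumes W: "W \<in> carrier_mat r r"
  shows "(0\<^sub>m k r :: complex mat) * cmat W = 0\<^sub>m k r"
  by (rule left_mult_zero_mat[OF cmat_carrier[OF W]])



theorem lemma2:
  fixes n r :: nat and A :: "real mat" and \<Psi> \<Psi>inv P K :: "complex mat" and U :: "real mat"
  assumes "1 \<le> r" and "r \<le> n - 1"
    and "A \<in> carrier_mat n n"
    and "\<Psi> \<in> carrier_mat n n" and "\<Psi>inv \<in> carrier_mat n n"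
    and "\<Psi> * \<Psi>inv = 1\<^sub>m n" and "\<Psi>inv * \<Psi> = 1\<^sub>m n"
    and "\<forall>j<n. unit_vec_norm (col \<Psi> j) \<and> gen_eigenvector (cmat A) (col \<Psi> j)"
    and "U \<in> stiefel r n"
    and "unitary_mat n P"
    and "K \<in> carrier_mat r r" and "invertible_mat K"
    and "\<Psi>inv * cmat U = P * (K @\<^sub>r 0\<^sub>m (n - r) r)"
  shows "\<exists>WP. unitary_mat r WP \<and> K = inv_sqrt_mat (Sigma11 r \<Psi> P) * WP \<and>
           (\<forall>W. real_orthogonal_mat r W \<longrightarrow>
              \<Psi> * P * ((inv_sqrt_mat (Sigma11 r \<Psi> P) * WP * cmat W) @\<^sub>r 0\<^sub>m (n - r) r)
                = cmat (U * W)
              \<and> U * W \<in> stiefel r n)"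
proof -
  have rn: "r \<le> n" and rn': "r + (n - r) = n" using assms(1,2) by auto
  have Psi: "\<Psi> \<in> carrier_mat n n" and Pi: "\<Psi>inv \<in> carrier_mat n n" using assms(4,5) .
  have PP: "unitary_mat n P" using assms(10) .
  have Pc: "P \<in> carrier_mat n n" and cP: "cadj P \<in> carrier_mat n n"
    using PP unitary_carrier unitary_cadj_carrier by auto
  have cPsi: "cadj \<Psi> \<in> carrier_mat n n" using Psi by auto
  have Kc: "K \<in> carrier_mat r r" using assms(11) .
  have cK: "cadj K \<in> carrier_mat r r" using Kc by auto
  have Uc: "U \<in> carrier_mat n r" and UtU: "transpose_mat U * U = 1\<^sub>m r"
    using assms(9) unfolding stiefel_def by auto
  define Z where "Z = (0\<^sub>m (n - r) r :: complex mat)"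
  have Zc: "Z \<in> carrier_mat (n - r) r" unfolding Z_def by simp
  define Kz where "Kz = K @\<^sub>r Z"
  have Kzc: "Kz \<in> carrier_mat n r" unfolding Kz_def using carrier_append_rows[OF Kc Zc] rn' by simp
  define C where "C = cmat U"
  have Cc: "C \<in> carrier_mat n r" unfolding C_def by (rule cmat_carrier[OF Uc])
  define M2 where "M2 = \<Psi> * P"
  have M2c: "M2 \<in> carrier_mat n n" unfolding M2_def using Psi Pc by simp
  define M1 where "M1 = cadj P * cadj \<Psi>"
  have M1c: "M1 \<in> carrier_mat n n" unfolding M1_def using cP cPsi by simp
  have M1M2: "cadj M2 = M1" unfolding M1_def M2_def by (rule cadj_mult[OF Psi Pc])
  have C_eq: "C = M2 * Kz"
  proof -
    have "C = (\<Psi> * \<Psi>inv) * C" using assms(6) Cc by simp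
    also have "\<dots> = \<Psi> * (\<Psi>inv * C)" by (rule assoc_mult_mat[OF Psi Pi Cc])
    also have "\<Psi>inv * C = P * Kz" unfolding C_def Kz_def Z_def using assms(13) .
    also have "\<Psi> * (P * Kz) = M2 * Kz" unfolding M2_def by (rule assoc_mult_mat[OF Psi Pc Kzc, symmetric])
    finally show ?thesis .
  qed
  have CC: "cadj C * C = 1\<^sub>m r"
  proof -
    have tU: "transpose_mat U \<in> carrier_mat r n" using Uc by simp
    have "cadj C * C = cmat (transpose_mat U) * cmat U" unfolding C_def cadj_cmat ..
    also have "\<dots> = cmat (transpose_mat U * U)" by (rule cmat_mult[OF tU Uc, symmetric])
    finally show ?thesis unfolding UtU cmat_one .
  qed
  define Sig where "Sig = Sigma_P \<Psi> P"
  have Sig_eq: "Sig = M1 * M2"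
  proof -
    have "Sig = cadj P * cadj \<Psi> * \<Psi> * P" unfolding Sig_def Sigma_P_def ..
    also have "\<dots> = M1 * \<Psi> * P" unfolding M1_def ..
    also have "\<dots> = M1 * M2" unfolding M2_def by (rule assoc_mult_mat[OF M1c Psi Pc])
    finally show ?thesis .
  qed
  have Sigc: "Sig \<in> carrier_mat n n" unfolding Sig_eq using M1c M2c by simp
  have hSig: "cadj Sig = Sig"
    unfolding Sig_eq M1M2[symmetric] cadj_mult[OF cadj_carrierI[OF M2c] M2c] by simp
  have cKz: "cadj Kz \<in> carrier_mat r n" using Kzc by auto
  have G: "cadj Kz * Sig * Kz = 1\<^sub>m r"
  proof -
    have "cadj C = cadj Kz * M1" unfolding C_eq cadj_mult[OF M2c Kzc] M1M2 ..
    then have "cadj C * C = cadj Kz * M1 * (M2 * Kz)" unfolding C_eq[symmetric] by simp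
    also have "\<dots> = cadj Kz * (M1 * (M2 * Kz))" using assoc_mult_mat[OF cKz M1c, of "M2 * Kz" r] M2c Kzc by simp
    also have "M1 * (M2 * Kz) = (M1 * M2) * Kz" by (rule assoc_mult_mat[OF M1c M2c Kzc, symmetric])
    also have "cadj Kz * ((M1 * M2) * Kz) = cadj Kz * (M1 * M2) * Kz"
      by (rule assoc_mult_mat[OF cKz _ Kzc, symmetric]) (use M1c M2c in simp)
    finally show ?thesis unfolding CC Sig_eq by simp
  qed
  define E where "E = Emat n r"
  have Ec: "E \<in> carrier_mat n r" unfolding E_def by (rule Emat_carrier)
  have cE: "cadj E \<in> carrier_mat r n" using Ec by auto
  have Kz_eq: "Kz = E * K" unfolding Kz_def Z_def E_def by (rule Emat_K[OF Kc rn, symmetric])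
  define M where "M = Sigma11 r \<Psi> P"
  have M_eq: "M = cadj E * Sig * E" unfolding M_def Sigma11_def Sig_def[symmetric] E_def
    by (rule Emat_ul[OF Sigc rn, symmetric])
  have Mc: "M \<in> carrier_mat r r" unfolding M_def Sigma11_def ul_block_def by simp
  have KMK: "cadj K * M * K = 1\<^sub>m r"
  proof -
    define X where "X = cadj E * Sig"
    have Xc: "X \<in> carrier_mat r n" unfolding X_def using cE Sigc by simp
    have "cadj Kz = cadj K * cadj E" unfolding Kz_eq by (rule cadj_mult[OF Ec Kc])
    then have "cadj Kz * Sig * Kz = cadj K * cadj E * Sig * (E * K)" unfolding Kz_eq by simp
    also have "cadj K * cadj E * Sig = cadj K * X" unfolding X_def by (rule assoc_mult_mat[OF cK cE Sigc])
    also have "cadj K * X * (E * K) = cadj K * (X * (E * K))"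
      by (rule assoc_mult_mat[OF cK Xc, of "E * K" r]) (use Ec Kc in simp)
    also have "X * (E * K) = X * E * K" by (rule assoc_mult_mat[OF Xc Ec Kc, symmetric])
    also have "cadj K * (X * E * K) = cadj K * (X * E) * K"
      by (rule assoc_mult_mat[OF cK _ Kc, symmetric]) (use Xc Ec in simp)
    also have "X * E = M" unfolding M_eq X_def ..
    finally show ?thesis using G by simp
  qed
  have hM: "cadj M = M"
  proof (rule eq_matI)
    fix i j assume "i < dim_row M" "j < dim_col M"
    then have i: "i < r" and j: "j < r" using Mc by auto
    have "cadj M $$ (i,j) = cnj (Sig $$ (j,i))" using i j Mc unfolding M_def Sigma11_def ul_block_def Sig_def by simp
    also have "\<dots> = cadj Sig $$ (i,j)" using i j rn Sigc by simp
    also have "\<dots> = M $$ (i,j)" unfolding hSig using i j unfolding M_def Sigma11_def ul_block_def Sig_def by simp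
    finally show "cadj M $$ (i,j) = M $$ (i,j)" .
  qed (use Mc in auto)
  have MKc: "M * K \<in> carrier_mat r r" using Mc Kc by simp
  have MKK: "M * K * cadj K = 1\<^sub>m r"
  proof (rule mat_mult_left_right_inverse[OF cK MKc])
    show "cadj K * (M * K) = 1\<^sub>m r" using KMK assoc_mult_mat[OF cK Mc Kc] by simp
  qed
  define N where "N = K * cadj K"
  have Nc: "N \<in> carrier_mat r r" unfolding N_def using Kc cK by simp
  have MN: "M * N = 1\<^sub>m r" unfolding N_def using MKK assoc_mult_mat[OF Mc Kc cK] by simp
  have NM: "N * M = 1\<^sub>m r" by (rule mat_mult_left_right_inverse[OF Mc Nc MN])
  have hN: "cadj N = N" unfolding N_def cadj_mult[OF Kc cK] by simp
  have pdN: "0 < Re (qf N v)" if v: "v \<in> carrier_vec r" and v0: "v \<noteq> 0\<^sub>v r" for v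
  proof -
    define y where "y = cadj K *\<^sub>v v"
    have yc: "y \<in> carrier_vec r" unfolding y_def using cK v by simp
    have y0: "y \<noteq> 0\<^sub>v r"
    proof
      assume "y = 0\<^sub>v r"
      have "v = (M * K * cadj K) *\<^sub>v v" unfolding MKK using v by simp
      also have "\<dots> = (M * K) *\<^sub>v y" unfolding y_def by (rule assoc_mult_mat_vec[OF MKc cK v])
      also have "\<dots> = 0\<^sub>v r" unfolding \<open>y = 0\<^sub>v r\<close> by (rule mult_zero_vec[OF MKc])
      finally show False using v0 by simp
    qed
    obtain k where k: "k < r" "y $ k \<noteq> 0"
    proof -
      have "\<exists>k<r. y $ k \<noteq> 0"
      proof (rule ccontr)
        assume "\<not> (\<exists>k<r. y $ k \<noteq> 0)"
        then have "y = 0\<^sub>v r" using yc by (intro eq_vecI) auto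
        then show False using y0 by simp
      qed
      then show ?thesis using that by auto
    qed
    have "N *\<^sub>v v = K *\<^sub>v y" unfolding N_def y_def by (rule assoc_mult_mat_vec[OF Kc cK v])
    then have "qf N v = (\<Sum>i<r. cnj (v $ i) * (K *\<^sub>v y) $ i)" unfolding qf_def using Nc by simp
    also have "\<dots> = (\<Sum>i<r. cnj (y $ i) * y $ i)" unfolding sum_cnj_mult_vec[OF Kc v yc] unfolding y_def ..
    also have "\<dots> = (\<Sum>i<r. complex_of_real ((cmod (y $ i))^2))" unfolding cnj_mult_self ..
    finally have "Re (qf N v) = (\<Sum>i<r. (cmod (y $ i))^2)" by simp
    also have "\<dots> > 0"
      by (rule sum_pos2[of "{..<r}" k]) (use k in auto)
    finally show ?thesis .
  qed
  obtain T where Tc: "T \<in> carrier_mat r r" and hT: "hpd_mat T" and TT: "T * T = N"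
    using hpd_sqrt_exists[OF Nc hN pdN] by blast
  have TTc: "T * T \<in> carrier_mat r r" using Tc by simp
  have TTM: "T * T * M = 1\<^sub>m r" unfolding TT NM ..
  have dM: "dim_row M = r" using Mc by simp
  have inv: "inv_sqrt_mat M = T" unfolding inv_sqrt_mat_def dM
  proof (rule the_equality)
    show "T \<in> carrier_mat r r \<and> hpd_mat T \<and> T * T * M = 1\<^sub>m r" using Tc hT TTM by simp
  next
    fix S assume S: "S \<in> carrier_mat r r \<and> hpd_mat S \<and> S * S * M = 1\<^sub>m r"
    then have Sc: "S \<in> carrier_mat r r" and hS: "hpd_mat S" and SSM: "S * S * M = 1\<^sub>m r" by auto
    have SSc: "S * S \<in> carrier_mat r r" using Sc by simp
    have "S * S = S * S * (M * N)" unfolding MN by (rule right_mult_one_mat[OF SSc, symmetric])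
    also have "\<dots> = S * S * M * N" by (rule assoc_mult_mat[OF SSc Mc Nc, symmetric])
    also have "\<dots> = T * T" unfolding SSM TT using Nc by simp
    finally show "S = T" by (rule hpd_sq_unique[OF Sc Tc hS hT])
  qed
  define WP where "WP = T * M * K"
  have TMc: "T * M \<in> carrier_mat r r" using Tc Mc by simp
  have WPc: "WP \<in> carrier_mat r r" unfolding WP_def using TMc Kc by simp
  have hT': "cadj T = T" using hpd_matD(1)[OF hT Tc] .
  have KTW: "T * WP = K"
  proof -
    have "T * WP = T * (T * M) * K" unfolding WP_def by (rule assoc_mult_mat[OF Tc TMc Kc, symmetric])
    also have "T * (T * M) = T * T * M" by (rule assoc_mult_mat[OF Tc Tc Mc, symmetric])
    finally show ?thesis unfolding TTM using Kc by simp
  qed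
  have cWP: "cadj WP = cadj K * (M * T)"
    unfolding WP_def cadj_mult[OF TMc Kc] cadj_mult[OF Tc Mc] hM hT' ..
  have MTc: "M * T \<in> carrier_mat r r" using Tc Mc by simp
  have WW: "cadj WP * WP = 1\<^sub>m r"
  proof -
    have "cadj WP * WP = cadj K * (M * T * WP)" unfolding cWP by (rule assoc_mult_mat[OF cK MTc WPc])
    also have "M * T * WP = M * K" unfolding assoc_mult_mat[OF Mc Tc WPc] KTW ..
    also have "cadj K * (M * K) = cadj K * M * K" by (rule assoc_mult_mat[OF cK Mc Kc, symmetric])
    finally show ?thesis unfolding KMK .
  qed
  have cWPc: "cadj WP \<in> carrier_mat r r" using WPc by auto
  have WW2: "WP * cadj WP = 1\<^sub>m r" by (rule mat_mult_left_right_inverse[OF cWPc WPc WW])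
  have uWP: "unitary_mat r WP" unfolding unitary_mat_def using WPc WW WW2 by simp
  have part2: "\<Psi> * P * ((inv_sqrt_mat (Sigma11 r \<Psi> P) * WP * cmat W) @\<^sub>r 0\<^sub>m (n - r) r) = cmat (U * W)
              \<and> U * W \<in> stiefel r n" if W: "real_orthogonal_mat r W" for W
  proof -
    have Wc: "W \<in> carrier_mat r r" and WtW: "transpose_mat W * W = 1\<^sub>m r"
      using W unfolding real_orthogonal_mat_def by auto
    have cWc: "cmat W \<in> carrier_mat r r" by (rule cmat_carrier[OF Wc])
    have e1: "inv_sqrt_mat (Sigma11 r \<Psi> P) * WP * cmat W = K * cmat W"
      unfolding M_def[symmetric] inv KTW ..
    have "Kz * cmat W = (K * cmat W) @\<^sub>r (Z * cmat W)" unfolding Kz_def by (rule append_rows_mult[OF Kc Zc cWc])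
    also have "Z * cmat W = Z" unfolding Z_def by (rule cmat_zero_append[OF Wc])
    finally have e2: "(K * cmat W) @\<^sub>r Z = Kz * cmat W" by (rule sym)
    have "\<Psi> * P * (Kz * cmat W) = M2 * Kz * cmat W"
      unfolding M2_def[symmetric] by (rule assoc_mult_mat[OF M2c Kzc cWc, symmetric])
    also have "\<dots> = cmat U * cmat W" unfolding C_eq[symmetric] C_def ..
    also have "\<dots> = cmat (U * W)" by (rule cmat_mult[OF Uc Wc, symmetric])
    finally have eq: "\<Psi> * P * ((inv_sqrt_mat (Sigma11 r \<Psi> P) * WP * cmat W) @\<^sub>r 0\<^sub>m (n - r) r) = cmat (U * W)"
      unfolding Z_def[symmetric] e1 e2 .
    have UWc: "U * W \<in> carrier_mat n r" using Uc Wc by simp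
    have tU: "transpose_mat U \<in> carrier_mat r n" and tW: "transpose_mat W \<in> carrier_mat r r" using Uc Wc by auto
    have UW: "U * W \<in> carrier_mat n r" using Uc Wc by simp
    have "transpose_mat (U * W) * (U * W) = transpose_mat W * transpose_mat U * (U * W)"
      unfolding transpose_mult[OF Uc Wc] ..
    also have "\<dots> = transpose_mat W * (transpose_mat U * (U * W))" by (rule assoc_mult_mat[OF tW tU UW])
    also have "transpose_mat U * (U * W) = transpose_mat U * U * W" by (rule assoc_mult_mat[OF tU Uc Wc, symmetric])
    also have "\<dots> = W" unfolding UtU using Wc by simp
    finally have "transpose_mat (U * W) * (U * W) = 1\<^sub>m r" unfolding WtW .
    then have "U * W \<in> stiefel r n" unfolding stiefel_def using UWc by simp
    then show ?thesis using eq by simp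
  qed
  have "K = inv_sqrt_mat (Sigma11 r \<Psi> P) * WP" unfolding M_def[symmetric] inv KTW ..
  then show ?thesis using uWP part2 by blast
qed

end
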